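(* Let $n\geq 2$ and let $\mathbb{H}^{n}\times\mathbb{R}=\{(x,t)\in\mathbb{R}^{n}\times\mathbb{R}: x=(x_1,\dots,x_n),\ x_n>0\}$ be endowed with the metric $g=\frac{1}{x_{n}^{2}}\sum_{i=1}^{n}dx_{i}^{2}+dt^{2}$. Let $0<m<\infty$ and $\lambda$ be constants and $f$ a smooth function on $\mathbb{H}^{n}\times\mathbb{R}$ with $Ric+\nabla^{2}f-\frac{1}{m}df\otimes df=\lambda g$. Then (for each fixed $x$) either $\frac{\partial f}{\partial t}(x,t)=\pm\sqrt{-m\lambda}$ for all $t$, or $\frac{\partial f}{\partial t}(x,t)=-\sqrt{-m\lambda}\tanh(\mu t+a)$ for all $t$, where $a=a(x)$ and $\mu=\sqrt{-\frac{\lambda}{m}}$.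
   Context: $Ric$ denotes the Ricci tensor of $g$ and $\nabla^2 f$ the Hessian of $f$ with respect to $g$. *)

theory Defs
  imports "HOL-Analysis.Analysis"
begin

definition pd :: "'i::finite \<Rightarrow> (real^'i \<Rightarrow> real) \<Rightarrow> real^'i \<Rightarrow> real" where
  "pd i F p = deriv (\<lambda>s. F (p + s *\<^sub>R axis i 1)) 0"

fun ipd :: "'i::finite list \<Rightarrow> (real^'i \<Rightarrow> real) \<Rightarrow> real^'i \<Rightarrow> real" where
  "ipd [] F = F"
| "ipd (i # is) F = pd i (ipd is F)"

definition smooth_on :: "(real^'i::finite) set \<Rightarrow> (real^'i \<Rightarrow> real) \<Rightarrow> bool" where
  "smooth_on U F \<longleftrightarrow>
     (\<forall>is. continuous_on U (ipd is F) \<and>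
        (\<forall>i. \<forall>p\<in>U. (\<lambda>s. ipd is F (p + s *\<^sub>R axis i 1)) differentiable (at 0)))"

definition christoffel :: "(real^'i::finite \<Rightarrow> real^'i^'i) \<Rightarrow> 'i \<Rightarrow> 'i \<Rightarrow> 'i \<Rightarrow> real^'i \<Rightarrow> real" where
  "christoffel G k i j p =
     (1/2) * (\<Sum>l\<in>UNIV. matrix_inv (G p) $ k $ l *
        (pd i (\<lambda>q. G q $ j $ l) p + pd j (\<lambda>q. G q $ i $ l) p - pd l (\<lambda>q. G q $ i $ j) p))"

definition ricci :: "(real^'i::finite \<Rightarrow> real^'i^'i) \<Rightarrow> 'i \<Rightarrow> 'i \<Rightarrow> real^'i \<Rightarrow> real" where
  "ricci G i j p =
     (\<Sum>k\<in>UNIV. pd k (christoffel G k i j) p - pd j (christoffel G k k i) p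
        + (\<Sum>l\<in>UNIV. christoffel G k k l p * christoffel G l i j p
                     - christoffel G k j l p * christoffel G l k i p))"

definition hessian :: "(real^'i::finite \<Rightarrow> real^'i^'i) \<Rightarrow> (real^'i \<Rightarrow> real) \<Rightarrow> 'i \<Rightarrow> 'i \<Rightarrow> real^'i \<Rightarrow> real" where
  "hessian G f i j p = pd i (pd j f) p - (\<Sum>k\<in>UNIV. christoffel G k i j p * pd k f p)"

text \<open>The metric g = x_n^{-2} \<Sum> dx_i^2 + dt^2 on H^n x R, where the coordinate index
  type 'i has n+1 elements, tt is the t-coordinate and xn the coordinate x_n.\<close>
definition hypR_metric :: "'i::finite \<Rightarrow> 'i \<Rightarrow> real^'i \<Rightarrow> real^'i^'i" where
  "hypR_metric tt xn p = (\<chi> i j. if i = j then (if i = tt then 1 else 1 / (p $ xn)^2) else 0)"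

definition hypR_domain :: "'i::finite \<Rightarrow> (real^'i) set" where
  "hypR_domain xn = {p. p $ xn > 0}"

end

theory Submission
  imports Defs
begin


lemma pd_const: "(\<And>q. F q = k) \<Longrightarrow> pd i F p = 0"
  unfolding pd_def by simp

lemma pd_zero_fun: "pd i (\<lambda>q. 0) p = 0"
  by (rule pd_const) simp

lemma G_tt1: "hypR_metric tt xn q $ tt $ l = (if l = tt then 1 else 0)"
  by (simp add: hypR_metric_def)
lemma G_tt2: "hypR_metric tt xn q $ l $ tt = (if l = tt then 1 else 0)"
  by (auto simp add: hypR_metric_def)

lemma xn_shift: "tt \<noteq> xn \<Longrightarrow> (p + s *\<^sub>R axis tt 1) $ xn = (p::real^'i::finite) $ xn"
  by (simp add: axis_def)

lemma G_shift: assumes "tt \<noteq> xn" shows "hypR_metric tt xn (p + s *\<^sub>R axis tt 1) = hypR_metric tt xn p"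
proof -
  have e: "(p + s *\<^sub>R axis tt 1) $ xn = p $ xn" using assms by (simp add: axis_def)
  show ?thesis unfolding hypR_metric_def e ..
qed

lemma pd_tt_G: "tt \<noteq> xn \<Longrightarrow> pd tt (\<lambda>q. hypR_metric tt xn q $ i $ l) p = 0"
  unfolding pd_def by (simp add: G_shift)

lemma chr_left: "tt \<noteq> xn \<Longrightarrow> christoffel (hypR_metric tt xn) k tt j q = 0"
  unfolding christoffel_def
  by (simp add: pd_tt_G G_tt1 pd_const[of _ "if _ = tt then 1 else 0"])

lemma chr_right: "tt \<noteq> xn \<Longrightarrow> christoffel (hypR_metric tt xn) k i tt q = 0"
  unfolding christoffel_def
  by (simp add: pd_tt_G G_tt1 G_tt2 pd_const[of _ "if _ = tt then 1 else 0"])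

lemma ricci_tt: "tt \<noteq> xn \<Longrightarrow> ricci (hypR_metric tt xn) tt tt p = 0"
proof -
  assume h: "tt \<noteq> xn"
  have e1: "christoffel (hypR_metric tt xn) k tt tt = (\<lambda>q. 0)" for k
    using chr_left[OF h] by auto
  have e2: "christoffel (hypR_metric tt xn) k k tt = (\<lambda>q. 0)" for k
    using chr_right[OF h] by auto
  show ?thesis unfolding ricci_def
    by (simp add: e1 e2 pd_zero_fun chr_left[OF h] chr_right[OF h])
qed

lemma hess_tt: "tt \<noteq> xn \<Longrightarrow> hessian (hypR_metric tt xn) f tt tt p = pd tt (pd tt f) p"
  by (simp add: hessian_def chr_left)



lemma lin_zero:
  fixes y a :: "real \<Rightarrow> real"
  assumes d: "\<And>s. (y has_real_derivative a s * y s) (at s)"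
    and ca: "continuous_on UNIV a" and z: "y s0 = 0"
  shows "y s1 = 0"
proof -
  obtain Kb where Kb: "\<And>s. s \<in> {min s0 s1..max s0 s1} \<Longrightarrow> \<bar>a s\<bar> \<le> Kb"
  proof -
    have "compact (a ` {min s0 s1..max s0 s1})"
      by (rule compact_continuous_image) (auto intro: continuous_on_subset[OF ca])
    then obtain B where "\<forall>v\<in>a ` {min s0 s1..max s0 s1}. norm v \<le> B"
      using compact_imp_bounded bounded_iff by metis
    then show ?thesis using that[of B] by (simp add: real_norm_def)
  qed
  show ?thesis
  proof (cases "s0 \<le> s1")
    case True
    define h where "h s = (y s)^2 * exp (- (2*Kb* s))" for s
    have "h s1 \<le> h s0"
    proof (rule DERIV_nonpos_imp_nonincreasing[OF True])
      fix s assume s: "s0 \<le> s" "s \<le> s1"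
      have "(h has_real_derivative 2 * (a s - Kb) * (y s)^2 * exp (- (2*Kb* s))) (at s)"
        unfolding h_def
        by (rule derivative_eq_intros d refl | simp)+ (simp add: algebra_simps power2_eq_square)
      moreover have "2 * (a s - Kb) * (y s)^2 * exp (- (2*Kb* s)) \<le> 0"
      proof -
        have "a s - Kb \<le> 0" using Kb[of s] s True by auto
        then show ?thesis by (simp add: mult_nonpos_nonneg)
      qed
      ultimately show "\<exists>d. (h has_real_derivative d) (at s) \<and> d \<le> 0" by blast
    qed
    then have "(y s1)^2 * exp (- (2*Kb* s1)) \<le> 0" using z by (simp add: h_def)
    then show ?thesis
      by (metis exp_gt_zero mult_le_0_iff not_less power2_less_0 zero_eq_power2 order.antisym zero_le_power2)
  next
    case False
    define h where "h s = (y s)^2 * exp (2*Kb* s)" for s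
    have "h s1 \<le> h s0"
    proof (rule DERIV_nonneg_imp_nondecreasing[of s1 s0 h])
      show "s1 \<le> s0" using False by simp
    next
      fix s assume s: "s1 \<le> s" "s \<le> s0"
      have "(h has_real_derivative 2 * (a s + Kb) * (y s)^2 * exp (2*Kb* s)) (at s)"
        unfolding h_def
        by (rule derivative_eq_intros d refl | simp)+ (simp add: algebra_simps power2_eq_square)
      moreover have "0 \<le> 2 * (a s + Kb) * (y s)^2 * exp (2*Kb* s)"
        using Kb[of s] s False by auto
      ultimately show "\<exists>d. (h has_real_derivative d) (at s) \<and> 0 \<le> d" by blast
    qed
    then have "(y s1)^2 * exp (2*Kb* s1) \<le> 0" using z by (simp add: h_def)
    then show ?thesis
      by (metis exp_gt_zero mult_le_0_iff not_less power2_less_0 zero_eq_power2 order.antisym zero_le_power2)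
  qed
qed

lemma ode_pos_false:
  fixes u :: "real \<Rightarrow> real"
  assumes m: "0 < m" and l: "0 < lam"
    and d: "\<And>s. (u has_real_derivative lam + (u s)^2 / m) (at s)"
  shows False
proof -
  define k where "k = sqrt (m * lam)"
  have k: "k > 0" "k^2 = m * lam" using m l by (auto simp: k_def)
  define v where "v s = arctan (u s / k) - k / m * s" for s
  have dv: "(v has_real_derivative 0) (at s)" for s
  proof -
    have "(v has_real_derivative inverse (1 + (u s / k)^2) * ((lam + (u s)^2 / m) / k) - k / m) (at s)"
    proof -
      have h1: "((\<lambda>s. u s / k) has_real_derivative (lam + (u s)^2 / m) / k) (at s)"
        using d by (rule DERIV_cdivide)
      have h2: "((\<lambda>s. arctan (u s / k)) has_real_derivative inverse (1 + (u s / k)^2) * ((lam + (u s)^2 / m) / k)) (at s)"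
        by (rule DERIV_chain2[OF DERIV_arctan h1])
      have h3: "((\<lambda>s. k / m * s) has_real_derivative k / m) (at s)"
        using DERIV_cmult_Id by blast
      show ?thesis unfolding v_def by (rule DERIV_diff[OF h2 h3])
    qed
    moreover have "inverse (1 + (u s / k)^2) * ((lam + (u s)^2 / m) / k) - k / m = 0"
    proof -
      have "1 + (u s / k)^2 = (k^2 + (u s)^2) / k^2" using k m l by (simp add: field_simps)
      moreover have "lam + (u s)^2 / m = (k^2 + (u s)^2) / m" using k m by (simp add: field_simps)
      moreover have "k^2 + (u s)^2 > 0" using k m l by (simp add: add_pos_nonneg)
      moreover have "inverse (P / k^2) * (P / m / k) = k / m" if "P > 0" for P
        using that k m by (simp add: field_simps power2_eq_square)
      ultimately show ?thesis by simp
    qed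
    ultimately show ?thesis by simp
  qed
  have "v (2 * pi * m / k) = v 0" using DERIV_isconst_all dv by blast
  then have "arctan (u (2 * pi * m / k) / k) = arctan (u 0 / k) + 2 * pi"
    using k m by (simp add: v_def)
  moreover have "arctan (u (2 * pi * m / k) / k) < pi/2" by (rule arctan_ubound)
  moreover have "- (pi/2) < arctan (u 0 / k)" by (rule arctan_lbound)
  ultimately show False using pi_gt_zero by linarith
qed

lemma ode_class:
  fixes u :: "real \<Rightarrow> real"
  assumes m: "0 < m"
    and d: "\<And>s. (u has_real_derivative lam + (u s)^2 / m) (at s)"
  shows "(\<forall>s. u s = sqrt (- m * lam))
       \<or> (\<forall>s. u s = - sqrt (- m * lam))
       \<or> (\<exists>a. \<forall>s. u s = - sqrt (- m * lam) * tanh (sqrt (- lam / m) * s + a))"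
proof -
  have mnz: "m \<noteq> 0" using m by simp
  have l: "lam \<le> 0" using ode_pos_false[OF m _ d] by force
  define c where "c = sqrt (- m * lam)"
  have c: "c \<ge> 0" "c^2 = - m * lam" using m l by (auto simp: c_def mult_nonneg_nonpos)
  have mu: "sqrt (- lam / m) = c / m"
  proof -
    have "- lam / m = (- m * lam) / m^2" using m by (simp add: power2_eq_square)
    then have "sqrt (- lam / m) = sqrt (- m * lam) / sqrt (m^2)" by (simp only: real_sqrt_divide)
    then show ?thesis using m by (simp add: c_def)
  qed
  have lamc: "lam + y^2 / m = (y^2 - c^2) / m" for y using c m by (simp add: field_simps)
  have d': "(u has_real_derivative ((u s)^2 - c^2) / m) (at s)" for s using d[of s] lamc by simp
  have cu: "continuous_on UNIV u"
    by (meson DERIV_isCont continuous_at_imp_continuous_on d)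
  have ca: "continuous_on UNIV (\<lambda>s. u s / m)"
    using m by (intro continuous_intros cu) auto
  show ?thesis
  proof (cases "\<exists>s0. u s0 = c")
    case True
    then obtain s0 where s0: "u s0 = c" by blast
    have "(u s - c) * exp (- (c / m * s)) = 0" for s
    proof (rule lin_zero[where a = "\<lambda>s. u s / m" and y = "\<lambda>s. (u s - c) * exp (- (c / m * s))", OF _ ca])
      fix s
      show "((\<lambda>s. (u s - c) * exp (- (c / m * s))) has_real_derivative
               u s / m * ((u s - c) * exp (- (c / m * s)))) (at s)"
        by ((rule derivative_eq_intros d' refl | simp)+, (simp add: field_simps power2_eq_square mnz)?)
    next
      show "(u s0 - c) * exp (- (c / m * s0)) = 0" using s0 by simp
    qed
    then show ?thesis by (simp add: c_def)
  next
    case F1: False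
    show ?thesis
    proof (cases "\<exists>s0. u s0 = - c")
      case True
      then obtain s0 where s0: "u s0 = - c" by blast
      have D: "((\<lambda>s. (u s + c) * exp (c / m * s)) has_real_derivative
                 u s / m * ((u s + c) * exp (c / m * s))) (at s)" for s
          by ((rule derivative_eq_intros d' refl | simp)+, (simp add: field_simps power2_eq_square mnz)?)
      have "(u s + c) * exp (c / m * s) = 0" for s
        using lin_zero[where y = "\<lambda>s. (u s + c) * exp (c / m * s)", OF D ca, of s0 s] s0 by simp
      then have "\<forall>s. u s = - c" by (simp add: add_eq_0_iff) (metis minus_minus)
      then show ?thesis by (simp add: c_def)
    next
      case F2: False
      have un: "u s \<noteq> c" "u s + c \<noteq> 0" for s using F1 F2 by (auto simp: add_eq_0_iff)
      show ?thesis
      proof (cases "c = 0")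
        case True
        define R where "R s = inverse (u s) + s / m" for s
        have "(R has_real_derivative 0) (at s)" for s
        proof -
          have u0: "u s \<noteq> 0" using un[of s] True by simp
          have h1: "(R has_real_derivative - ((((u s)^2 - c^2) / m) * inverse (u s ^ Suc (Suc 0))) + 1 / m) (at s)"
            unfolding R_def
            by (rule DERIV_add[OF DERIV_inverse_fun[OF d' u0] DERIV_cdivide[OF DERIV_ident]])
          have h2: "- ((((u s)^2 - c^2) / m) * inverse (u s ^ Suc (Suc 0))) + 1 / m = 0"
            using u0 True mnz by (simp add: field_simps power2_eq_square)
          show ?thesis using h1 unfolding h2 .
        qed
        then have "R (m / u 0) = R 0" using DERIV_isconst_all by blast
        then have "inverse (u (m / u 0)) = 0" using m un[of 0] True by (simp add: R_def inverse_eq_divide)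
        then show ?thesis using un[of "m / u 0"] True by simp
      next
        case False
        then have cp: "c > 0" using c by simp
        define Q where "Q s = (u s - c) / (u s + c) * exp (- (2 * (c / m) * s))" for s
        have "(Q has_real_derivative 0) (at s)" for s
        proof -
          define D where "D = ((u s)^2 - c^2) / m"
          define e where "e = exp (- (2 * (c / m) * s))"
          have hd: "(u has_real_derivative D) (at s)" using d' by (simp add: D_def)
          have h1: "((\<lambda>s. u s - c) has_real_derivative D) (at s)"
            using DERIV_diff[OF hd DERIV_const[of c]] by simp
          have h2: "((\<lambda>s. u s + c) has_real_derivative D) (at s)"
            using DERIV_add[OF hd DERIV_const[of c]] by simp
          have h3: "((\<lambda>s. (u s - c) / (u s + c)) has_real_derivative
                      (D * (u s + c) - (u s - c) * D) / ((u s + c) * (u s + c))) (at s)"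
            by (rule DERIV_divide[OF h1 h2 un(2)])
          have h4: "((\<lambda>s. exp (- (2 * (c / m) * s))) has_real_derivative e * (- (2 * (c / m)))) (at s)"
            unfolding e_def by (rule derivative_eq_intros refl | simp)+
          have h5: "(Q has_real_derivative
              (D * (u s + c) - (u s - c) * D) / ((u s + c) * (u s + c)) * e
              + e * (- (2 * (c / m))) * ((u s - c) / (u s + c))) (at s)"
          proof -
            have Qeq: "Q = (\<lambda>s. (u s - c) / (u s + c) * exp (- (2 * (c / m) * s)))"
              by (rule ext) (simp add: Q_def)
            show ?thesis using DERIV_mult[OF h3 h4] unfolding Qeq e_def .
          qed
          have h6: "(D * (u s + c) - (u s - c) * D) / ((u s + c) * (u s + c)) * e
              + e * (- (2 * (c / m))) * ((u s - c) / (u s + c)) = 0"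
          proof -
            have "(D * (u s + c) - (u s - c) * D) / ((u s + c) * (u s + c))
                 = (u s - c) / (u s + c) * (2 * (c / m))"
            proof -
              have n: "D * (u s + c) - (u s - c) * D = ((u s - c) * (2 * (c / m))) * (u s + c)"
                unfolding D_def using mnz by (simp add: field_simps power2_eq_square)
              show ?thesis unfolding n using un(2)[of s] by simp
            qed
            then show ?thesis by (simp add: algebra_simps)
          qed
          show ?thesis using h5 unfolding h6 .
        qed
        then have Qc: "Q s = Q 0" for s using DERIV_isconst_all by blast
        define q where "q = (u 0 - c) / (u 0 + c)"
        have Qs: "(u s - c) / (u s + c) = q * exp (2 * (c / m) * s)" for s
        proof -
          have "(u s - c) / (u s + c) * exp (- (2 * (c / m) * s)) = q"
            using Qc[of s] by (simp add: Q_def q_def)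
          moreover have "X = X * exp (- y) * exp y" for X y :: real
            by (simp add: mult.assoc flip: exp_add)
          ultimately show ?thesis by metis
        qed
        have q0: "q \<noteq> 0" using un[of 0] by (simp add: q_def)
        have qneg: "q < 0"
        proof (rule ccontr)
          assume "\<not> q < 0"
          then have qp: "q > 0" using q0 by simp
          define s1 where "s1 = - ln q / (2 * (c / m))"
          have "2 * (c / m) * s1 = - ln q" using cp m by (simp add: s1_def)
          then have "exp (2 * (c / m) * s1) = 1 / q" using qp by (simp add: exp_minus inverse_eq_divide)
          then have "(u s1 - c) / (u s1 + c) = 1" using Qs[of s1] qp by simp
          then have "u s1 - c = u s1 + c" using un[of s1] by (simp add: divide_eq_1_iff)
          then show False using cp by simp
        qed
        define a where "a = ln (- q) / 2"
        have "u s = - c * tanh (c / m * s + a)" for s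
        proof -
          define E where "E = exp (2 * (c / m * s + a))"
          have Ep: "E > 0" by (simp add: E_def)
          have "E = exp (2 * (c / m) * s) * (- q)"
            using qneg by (simp add: E_def a_def exp_add algebra_simps)
          then have "(u s - c) / (u s + c) = - E" using Qs[of s] by simp
          then have "u s - c = - E * (u s + c)" using un[of s] by (simp add: divide_eq_eq)
          then have us: "u s = c * (1 - E) / (1 + E)" using Ep by (simp add: field_simps)
          have "exp (- 2 * (c / m * s + a)) = 1 / E"
            unfolding E_def by (simp only: mult_minus_left exp_minus inverse_eq_divide)
          then have "tanh (c / m * s + a) = (1 - 1 / E) / (1 + 1 / E)"
            by (simp add: tanh_real_altdef)
          also have "\<dots> = (E - 1) / (E + 1)"
          proof -
            have e1: "1 - 1/E = (E-1)/E" "1 + 1/E = (E+1)/E" using Ep by (simp_all add: diff_divide_distrib add_divide_distrib)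
            show ?thesis unfolding e1 using Ep by simp
          qed
          finally have t: "tanh (c / m * s + a) = (E - 1) / (E + 1)" .
          have "E + 1 \<noteq> 0" "1 + E \<noteq> 0" using Ep by simp_all
          then show ?thesis unfolding us t by (simp add: field_simps)
        qed
        then have "\<forall>s. u s = - c * tanh (sqrt (- lam / m) * s + a)" unfolding mu by blast
        then show ?thesis unfolding c_def by blast
      qed
    qed
  qed
qed


theorem lemma3:
  fixes tt xn :: "'i::finite" and m lam :: real and f :: "real^'i \<Rightarrow> real"
  assumes dim: "CARD('i) \<ge> 3"
    and idx: "tt \<noteq> xn"
    and m: "0 < m"
    and smooth: "smooth_on (hypR_domain xn) f"
    and eq: "\<And>p i j. p \<in> hypR_domain xn \<Longrightarrow>
        ricci (hypR_metric tt xn) i j p + hessian (hypR_metric tt xn) f i j p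
          - (1/m) * pd i f p * pd j f p = lam * hypR_metric tt xn p $ i $ j"
    and x: "x \<in> hypR_domain xn"
  shows "(\<forall>s. pd tt f (\<chi> k. if k = tt then s else x $ k) = sqrt (- m * lam))
       \<or> (\<forall>s. pd tt f (\<chi> k. if k = tt then s else x $ k) = - sqrt (- m * lam))
       \<or> (\<exists>a. \<forall>s. pd tt f (\<chi> k. if k = tt then s else x $ k)
                 = - sqrt (- m * lam) * tanh (sqrt (- lam / m) * s + a))"
proof -
  define line :: "real \<Rightarrow> real^'i" where "line s = (\<chi> k. if k = tt then s else x $ k)" for s
  define u where "u s = pd tt f (line s)" for s
  have ldom: "line s \<in> hypR_domain xn" for s
    using x idx by (simp add: line_def hypR_domain_def)
  have lsh: "line s + r *\<^sub>R axis tt 1 = line (s + r)" for s r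
    by (simp add: line_def vec_eq_iff axis_def)
  have du: "(u has_real_derivative lam + (u s)^2 / m) (at s)" for s
  proof -
    have "(\<lambda>r. ipd [tt] f (line s + r *\<^sub>R axis tt 1)) differentiable (at 0)"
      using smooth ldom[of s] unfolding smooth_on_def by blast
    then have "(\<lambda>r. u (r + s)) differentiable (at 0)"
      by (simp add: lsh u_def add.commute)
    then obtain D where D: "((\<lambda>r. u (r + s)) has_real_derivative D) (at 0)"
      using real_differentiable_def by blast
    then have Du: "(u has_real_derivative D) (at s)"
      using DERIV_shift[of u D 0 s] by simp
    have "pd tt (pd tt f) (line s) = deriv (\<lambda>r. u (r + s)) 0"
      unfolding pd_def[of tt "pd tt f"] by (simp add: lsh u_def add.commute)
    also have "\<dots> = D" using D by (rule DERIV_imp_deriv)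
    finally have pp: "pd tt (pd tt f) (line s) = D" .
    have "ricci (hypR_metric tt xn) tt tt (line s) + hessian (hypR_metric tt xn) f tt tt (line s)
          - (1/m) * pd tt f (line s) * pd tt f (line s) = lam * hypR_metric tt xn (line s) $ tt $ tt"
      using eq ldom by blast
    then have "D - (1/m) * u s * u s = lam"
      by (simp add: ricci_tt[OF idx] hess_tt[OF idx] pp G_tt1 u_def)
    then have "D = lam + (u s)^2 / m" by (simp add: power2_eq_square)
    then show ?thesis using Du by simp
  qed
  have "(\<forall>s. u s = sqrt (- m * lam))
       \<or> (\<forall>s. u s = - sqrt (- m * lam))
       \<or> (\<exists>a. \<forall>s. u s = - sqrt (- m * lam) * tanh (sqrt (- lam / m) * s + a))"
    by (rule ode_class[OF m du])
  then show ?thesis unfolding u_def line_def .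
qed

end
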